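(* Let $(X,d)$ be a compact metric space with at least two points and $f_{1,\infty}$ a finitely generated commutative sequence of continuous surjective self-maps of $X$. If $(X,f_{1,\infty})$ is weakly mixing, then it is thickly sensitive.
   Context: Finitely generated: there is a finite set $F$ of continuous self-maps of $X$ with $f_i\in F$ for all $i$. Commutative: $f_i\circ f_j=f_j\circ f_i$ for all $i,j$. Write $f_1^n=f_n\circ\cdots\circ f_1$. Weakly mixing: for all non-empty open $U_1,U_2,V_1,V_2$ there is $n$ with $f_1^n(U_i)\cap V_i\ne\emptyset$, $i=1,2$. For open $U$ and $\delta>0$, $N_{f_{1,\infty}}(U,\delta)=\{n\in\mathbb{N}:\exists x,y\in U,\ d(f_1^n(x),f_1^n(y))>\delta\}$. A set $T\subseteq\mathbb{N}$ is thick if for every $p\in\mathbb{N}$ there is $n$ with $\{n,n+1,\dots,n+p\}\subseteq T$. Thickly sensitive: there is $\delta>0$ such that $N_{f_{1,\infty}}(U,\delta)$ is thick for every non-empty open $U\subseteq X$. *)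

theory Defs
  imports "HOL-Analysis.Analysis"
begin

text \<open>The sequence is indexed from 1: f 1, f 2, ...; the value f 0 is irrelevant.
  seq_iter f n = f n o ... o f 1, with seq_iter f 0 = id.\<close>
fun seq_iter :: "(nat \<Rightarrow> 'a \<Rightarrow> 'a) \<Rightarrow> nat \<Rightarrow> 'a \<Rightarrow> 'a" where
  "seq_iter f 0 = id"
| "seq_iter f (Suc n) = f (Suc n) \<circ> seq_iter f n"

definition finitely_generated :: "'a::topological_space set \<Rightarrow> (nat \<Rightarrow> 'a \<Rightarrow> 'a) \<Rightarrow> bool" where
  "finitely_generated X f \<longleftrightarrow>
     (\<exists>F. finite F \<and> (\<forall>g\<in>F. continuous_on X g \<and> g ` X \<subseteq> X) \<and>
          (\<forall>i\<ge>1. \<exists>g\<in>F. \<forall>x\<in>X. f i x = g x))"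

definition commutative_seq :: "'a::topological_space set \<Rightarrow> (nat \<Rightarrow> 'a \<Rightarrow> 'a) \<Rightarrow> bool" where
  "commutative_seq X f \<longleftrightarrow> (\<forall>i\<ge>1. \<forall>j\<ge>1. \<forall>x\<in>X. f i (f j x) = f j (f i x))"

definition weakly_mixing_seq :: "'a::topological_space set \<Rightarrow> (nat \<Rightarrow> 'a \<Rightarrow> 'a) \<Rightarrow> bool" where
  "weakly_mixing_seq X f \<longleftrightarrow>
     (\<forall>U1 U2 V1 V2. openin (top_of_set X) U1 \<and> U1 \<noteq> {} \<and> openin (top_of_set X) U2 \<and> U2 \<noteq> {} \<and>
        openin (top_of_set X) V1 \<and> V1 \<noteq> {} \<and> openin (top_of_set X) V2 \<and> V2 \<noteq> {} \<longrightarrow>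
        (\<exists>n\<ge>1. seq_iter f n ` U1 \<inter> V1 \<noteq> {} \<and> seq_iter f n ` U2 \<inter> V2 \<noteq> {}))"

definition sens_times :: "(nat \<Rightarrow> 'a::metric_space \<Rightarrow> 'a) \<Rightarrow> 'a set \<Rightarrow> real \<Rightarrow> nat set" where
  "sens_times f U \<delta> = {n. n \<ge> 1 \<and> (\<exists>x\<in>U. \<exists>y\<in>U. dist (seq_iter f n x) (seq_iter f n y) > \<delta>)}"

definition thick :: "nat set \<Rightarrow> bool" where
  "thick T \<longleftrightarrow> (\<forall>p. \<exists>n. {n..n+p} \<subseteq> T)"

definition thickly_sensitive :: "'a::metric_space set \<Rightarrow> (nat \<Rightarrow> 'a \<Rightarrow> 'a) \<Rightarrow> bool" where
  "thickly_sensitive X f \<longleftrightarrow>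
     (\<exists>\<delta>>0. \<forall>U. openin (top_of_set X) U \<and> U \<noteq> {} \<longrightarrow> thick (sens_times f U \<delta>))"

end

theory Submission
  imports Defs
begin

lemma si_shift: "seq_iter f (n + k) = seq_iter (\<lambda>i. f (n + i)) k \<circ> seq_iter f n"
  by (induction k) auto

lemma si_maps:
  assumes "\<And>i. i \<ge> 1 \<Longrightarrow> f i ` X \<subseteq> X"
  shows "x \<in> X \<Longrightarrow> seq_iter f n x \<in> X"
  using assms by (induction n arbitrary: x) auto

lemma si_cont:
  assumes "\<And>i. i \<ge> 1 \<Longrightarrow> f i ` X \<subseteq> X" "\<And>i. i \<ge> 1 \<Longrightarrow> continuous_on X (f i)"
  shows "continuous_on X (seq_iter f n)"
proof (induction n)
  case 0 then show ?case by (simp add: continuous_on_id)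
next
  case (Suc n)
  have "seq_iter f n ` X \<subseteq> X" using si_maps[where f=f, OF assms(1)] by blast
  then have "continuous_on (seq_iter f n ` X) (f (Suc n))"
    using continuous_on_subset assms(2)[of "Suc n"] by auto
  then have "continuous_on X (f (Suc n) \<circ> seq_iter f n)"
    using Suc continuous_on_compose by blast
  then show ?case by simp
qed

lemma si_surj:
  assumes "\<And>i. i \<ge> 1 \<Longrightarrow> f i ` X = X"
  shows "seq_iter f n ` X = X"
proof (induction n)
  case 0 then show ?case by simp
next
  case (Suc n)
  have "seq_iter f (Suc n) ` X = f (Suc n) ` (seq_iter f n ` X)" by (simp add: image_image)
  then show ?case using Suc assms[of "Suc n"] by simp
qed

lemma si_comm1:
  assumes "\<And>i. i \<ge> 1 \<Longrightarrow> f i ` X \<subseteq> X" "commutative_seq X f" "i \<ge> 1"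
  shows "x \<in> X \<Longrightarrow> f i (seq_iter f n x) = seq_iter f n (f i x)"
proof (induction n arbitrary: x)
  case 0 then show ?case by simp
next
  case (Suc n)
  have "seq_iter f n x \<in> X" using si_maps[where f=f, OF assms(1)] Suc.prems by blast
  then have "f i (f (Suc n) (seq_iter f n x)) = f (Suc n) (f i (seq_iter f n x))"
    using assms(2,3) unfolding commutative_seq_def by auto
  then show ?case using Suc by simp
qed

lemma si_comm:
  assumes "\<And>i. i \<ge> 1 \<Longrightarrow> f i ` X \<subseteq> X" "commutative_seq X f"
  shows "x \<in> X \<Longrightarrow> seq_iter f m (seq_iter f n x) = seq_iter f n (seq_iter f m x)"
proof (induction m arbitrary: x)
  case 0 then show ?case by simp
next
  case (Suc m)
  have "seq_iter f m x \<in> X" using si_maps[where f=f, OF assms(1)] Suc.prems by blast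
  then show ?case using Suc si_comm1[OF assms, of "Suc m"] by simp
qed

definition good :: "'a::topological_space set \<Rightarrow> 'a set \<Rightarrow> bool" where
  "good X U \<longleftrightarrow> openin (top_of_set X) U \<and> U \<noteq> {}"

lemma multi_pairs:
  assumes maps: "\<And>i. i \<ge> 1 \<Longrightarrow> f i ` X \<subseteq> X"
    and cont: "\<And>i. i \<ge> 1 \<Longrightarrow> continuous_on X (f i)"
    and comm: "commutative_seq X f" and wm: "weakly_mixing_seq X f"
  shows "\<forall>ps. length ps = k \<longrightarrow> (\<forall>(U,V)\<in>set ps. good X U \<and> good X V) \<longrightarrow>
     (\<exists>n\<ge>1. \<forall>(U,V)\<in>set ps. seq_iter f n ` U \<inter> V \<noteq> {})"
proof (induction k)
  case 0 then show ?case by auto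
next
  case (Suc k)
  show ?case
  proof (intro allI impI)
    fix ps :: "('a set \<times> 'a set) list"
    assume len: "length ps = Suc k" and gd: "\<forall>(U,V)\<in>set ps. good X U \<and> good X V"
    obtain U0 V0 ps' where ps: "ps = (U0,V0) # ps'" using len by (cases ps) auto
    show "\<exists>n\<ge>1. \<forall>(U,V)\<in>set ps. seq_iter f n ` U \<inter> V \<noteq> {}"
    proof (cases ps')
      case Nil
      have "good X U0" "good X V0" using gd ps by auto
      then obtain n where "n \<ge> 1" "seq_iter f n ` U0 \<inter> V0 \<noteq> {}"
        using wm[unfolded weakly_mixing_seq_def, rule_format, of U0 U0 V0 V0] unfolding good_def by auto
      then show ?thesis using ps Nil by auto
    next
      case (Cons p rest)
      obtain U1 V1 where p: "p = (U1,V1)" by (cases p)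
      have g0: "good X U0" "good X V0" "good X U1" "good X V1" using gd ps Cons p by auto
      have ex: "\<exists>m\<ge>1. seq_iter f m ` U0 \<inter> U1 \<noteq> {} \<and> seq_iter f m ` V0 \<inter> V1 \<noteq> {}"
        using g0 unfolding good_def
        by (intro wm[unfolded weakly_mixing_seq_def, rule_format, of U0 V0 U1 V1]) simp
      obtain m where m: "m \<ge> 1" "seq_iter f m ` U0 \<inter> U1 \<noteq> {}" "seq_iter f m ` V0 \<inter> V1 \<noteq> {}"
        using ex by (elim exE conjE)
      define U' where "U' = U0 \<inter> (X \<inter> seq_iter f m -` U1)"
      define V' where "V' = V0 \<inter> (X \<inter> seq_iter f m -` V1)"
      have mc: "continuous_on X (seq_iter f m)" by (rule si_cont[where f=f, OF maps cont])
      have mm: "seq_iter f m \<in> X \<rightarrow> X" using si_maps[where f=f, OF maps] by blast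
      have U0X: "U0 \<subseteq> X" "V0 \<subseteq> X" using g0 unfolding good_def by (meson openin_imp_subset)+
      have "good X U'"
      proof -
        have "openin (top_of_set X) U'" unfolding U'_def
          using g0 unfolding good_def
          by (intro openin_Int continuous_openin_preimage[OF mc mm]) simp_all
        moreover obtain y where "y \<in> U0" "seq_iter f m y \<in> U1" using m(2) by blast
        then have "U' \<noteq> {}" unfolding U'_def using U0X by blast
        ultimately show ?thesis unfolding good_def by blast
      qed
      moreover have "good X V'"
      proof -
        have "openin (top_of_set X) V'" unfolding V'_def
          using g0 unfolding good_def
          by (intro openin_Int continuous_openin_preimage[OF mc mm]) simp_all
        moreover obtain y where "y \<in> V0" "seq_iter f m y \<in> V1" using m(3) by blast
        then have "V' \<noteq> {}" unfolding V'_def using U0X by blast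
        ultimately show ?thesis unfolding good_def by blast
      qed
      ultimately have "\<forall>(U,V)\<in>set ((U',V') # rest). good X U \<and> good X V"
        using gd ps Cons by auto
      moreover have "length ((U',V') # rest) = k" using len ps Cons by simp
      ultimately obtain n where n: "n \<ge> 1" "\<forall>(U,V)\<in>set ((U',V') # rest). seq_iter f n ` U \<inter> V \<noteq> {}"
        using Suc.IH by blast
      then obtain x where x: "x \<in> U'" "seq_iter f n x \<in> V'" by auto
      have xX: "x \<in> X" using x U'_def by auto
      have c1: "seq_iter f n ` U0 \<inter> V0 \<noteq> {}" using x unfolding U'_def V'_def by auto
      have "seq_iter f n (seq_iter f m x) = seq_iter f m (seq_iter f n x)"
        using si_comm[OF maps comm xX] by simp
      then have c2: "seq_iter f n ` U1 \<inter> V1 \<noteq> {}" using x unfolding U'_def V'_def by force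
      show ?thesis using n c1 c2 ps Cons p by auto
    qed
  qed
qed

lemma multi_pairs_set:
  assumes "\<And>i. i \<ge> 1 \<Longrightarrow> f i ` X \<subseteq> X"
    and "\<And>i. i \<ge> 1 \<Longrightarrow> continuous_on X (f i)"
    and "commutative_seq X f" and "weakly_mixing_seq X f"
    and "finite S" and "\<forall>(U,V)\<in>S. good X U \<and> good X V"
  shows "\<exists>n\<ge>1. \<forall>(U,V)\<in>S. seq_iter f n ` U \<inter> V \<noteq> {}"
proof -
  obtain ps where "set ps = S" using finite_list[OF assms(5)] by blast
  then show ?thesis using multi_pairs[OF assms(1-4), of "length ps"] assms(6) by blast
qed

lemma finite_shifts:
  assumes fg: "finitely_generated X f" and maps: "\<And>i. i \<ge> 1 \<Longrightarrow> f i ` X \<subseteq> X"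
  shows "finite {restrict (seq_iter (\<lambda>i. f (n + i)) k) X | n k. k \<le> p}"
proof -
  obtain F where F: "finite F" "\<forall>i\<ge>1. \<exists>g\<in>F. \<forall>x\<in>X. f i x = g x"
    using fg unfolding finitely_generated_def by blast
  define G where "G = rec_nat {restrict id X} (\<lambda>k A. (\<lambda>(g,h). restrict (g \<circ> h) X) ` (F \<times> A))"
  have G0: "G 0 = {restrict id X}" and GS: "\<And>k. G (Suc k) = (\<lambda>(g,h). restrict (g \<circ> h) X) ` (F \<times> G k)"
    unfolding G_def by simp_all
  have fin: "finite (G k)" for k by (induction k) (simp_all add: G0 GS F(1))
  have mem: "restrict (seq_iter (\<lambda>i. f (n + i)) k) X \<in> G k" for n k
  proof (induction k)
    case 0 then show ?case by (auto simp: G0 restrict_def)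
  next
    case (Suc k)
    obtain g where g: "g \<in> F" "\<forall>x\<in>X. f (n + Suc k) x = g x" using F(2) by force
    have mp: "\<And>i. i \<ge> 1 \<Longrightarrow> (\<lambda>i. f (n + i)) i ` X \<subseteq> X" using maps by simp
    have eq: "restrict (seq_iter (\<lambda>i. f (n + i)) (Suc k)) X
          = restrict (g \<circ> restrict (seq_iter (\<lambda>i. f (n + i)) k) X) X"
      using g(2) si_maps[where f="\<lambda>i. f (n + i)", OF mp] by (auto simp: restrict_def fun_eq_iff)
    show ?case unfolding GS
      apply (rule image_eqI[where x="(g, restrict (seq_iter (\<lambda>i. f (n + i)) k) X)"])
       apply (simp only: eq prod.case)
      using Suc.IH g(1) by blast
  qed
  have "{restrict (seq_iter (\<lambda>i. f (n + i)) k) X | n k. k \<le> p} \<subseteq> (\<Union>k\<le>p. G k)"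
    using mem by blast
  moreover have "finite (\<Union>k\<le>p. G k)" using fin by simp
  ultimately show ?thesis by (rule finite_subset)
qed

theorem mainTheorem14:
  fixes X :: "'a::metric_space set" and f :: "nat \<Rightarrow> 'a \<Rightarrow> 'a"
  assumes "compact X"
    and "\<exists>a\<in>X. \<exists>b\<in>X. a \<noteq> b"
    and "\<And>i. i \<ge> 1 \<Longrightarrow> continuous_on X (f i)"
    and "\<And>i. i \<ge> 1 \<Longrightarrow> f i ` X = X"
    and "finitely_generated X f"
    and "commutative_seq X f"
    and "weakly_mixing_seq X f"
  shows "thickly_sensitive X f"
proof -
  have maps: "\<And>i. i \<ge> 1 \<Longrightarrow> f i ` X \<subseteq> X" using assms(4) by simp
  obtain a b where ab: "a \<in> X" "b \<in> X" "a \<noteq> b" using assms(2) by blast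
  define e where "e = dist a b / 3"
  have e: "e > 0" using ab by (simp add: e_def)
  define V1 where "V1 = X \<inter> ball a e"
  define V2 where "V2 = X \<inter> ball b e"
  have gV: "good X V1" "good X V2" unfolding good_def V1_def V2_def
    using ab e by (auto simp: openin_open_Int)
  have far: "dist x y > e" if "x \<in> V1" "y \<in> V2" for x y
  proof -
    have "dist a b \<le> dist a x + dist x y + dist y b"
      by (metis add.commute add_le_cancel_left dist_triangle dist_triangle_le order_trans)
    moreover have "dist a x < e" "dist y b < e" using that unfolding V1_def V2_def
      by (auto simp: dist_commute)
    ultimately show ?thesis unfolding e_def by linarith
  qed
  have "thick (sens_times f U e)" if U: "good X U" for U
    unfolding thick_def
  proof
    fix p
    define H where "H = {restrict (seq_iter (\<lambda>i. f (n + i)) k) X | n k. k \<le> p}"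
    have finH: "finite H" unfolding H_def by (rule finite_shifts[OF assms(5) maps])
    define S where "S = (\<lambda>h. (U, X \<inter> h -` V1)) ` H \<union> (\<lambda>h. (U, X \<inter> h -` V2)) ` H"
    have pre: "X \<inter> restrict g X -` V = X \<inter> g -` V" for g :: "'a \<Rightarrow> 'a" and V by auto
    have gp: "good X (X \<inter> seq_iter (\<lambda>i. f (n + i)) k -` V)" if "good X V" for n k V
    proof -
      have mp: "\<And>i. i \<ge> 1 \<Longrightarrow> (\<lambda>i. f (n + i)) i ` X \<subseteq> X" using maps by simp
      have cp: "\<And>i. i \<ge> 1 \<Longrightarrow> continuous_on X ((\<lambda>i. f (n + i)) i)" using assms(3) by simp
      have sp: "\<And>i. i \<ge> 1 \<Longrightarrow> (\<lambda>i. f (n + i)) i ` X = X" using assms(4) by simp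
      have o: "openin (top_of_set X) (X \<inter> seq_iter (\<lambda>i. f (n + i)) k -` V)"
        using continuous_openin_preimage[OF si_cont[where f="\<lambda>i. f (n + i)", OF mp cp]] si_maps[where f="\<lambda>i. f (n + i)", OF mp] that
        unfolding good_def by blast
      have "V \<subseteq> X" "V \<noteq> {}" using that unfolding good_def by (auto dest: openin_imp_subset)
      then have "X \<inter> seq_iter (\<lambda>i. f (n + i)) k -` V \<noteq> {}"
      proof -
        obtain v where v: "v \<in> V" using \<open>V \<noteq> {}\<close> by blast
        have "v \<in> seq_iter (\<lambda>i. f (n + i)) k ` X"
          using si_surj[where f="\<lambda>i. f (n + i)", OF sp, of k] v \<open>V \<subseteq> X\<close> by blast
        then obtain x where "x \<in> X" "seq_iter (\<lambda>i. f (n + i)) k x = v" by blast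
        then show ?thesis using v by blast
      qed
      with o show ?thesis unfolding good_def by blast
    qed
    have gS: "\<forall>(A,B)\<in>S. good X A \<and> good X B"
    proof -
      have "good X (X \<inter> h -` V)" if "h \<in> H" "good X V" for h V
      proof -
        obtain n k where "h = restrict (seq_iter (\<lambda>i. f (n + i)) k) X"
          using \<open>h \<in> H\<close> unfolding H_def by blast
        then have "X \<inter> h -` V = X \<inter> seq_iter (\<lambda>i. f (n + i)) k -` V" using pre by simp
        then show ?thesis using gp[OF \<open>good X V\<close>] by simp
      qed
      then show ?thesis unfolding S_def using U gV by blast
    qed
    obtain n where n: "n \<ge> 1" "\<forall>(A,B)\<in>S. seq_iter f n ` A \<inter> B \<noteq> {}"
      using multi_pairs_set[OF maps assms(3,6,7) _ gS] finH unfolding S_def by blast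
    have "{n..n+p} \<subseteq> sens_times f U e"
    proof
      fix j assume j: "j \<in> {n..n+p}"
      define k where "k = j - n"
      have jk: "j = n + k" "k \<le> p" using j unfolding k_def by auto
      let ?h = "restrict (seq_iter (\<lambda>i. f (n + i)) k) X"
      have hH: "?h \<in> H" unfolding H_def using jk by blast
      have m1: "(U, X \<inter> ?h -` V1) \<in> S" "(U, X \<inter> ?h -` V2) \<in> S" unfolding S_def using hH by auto
      have h1: "seq_iter f n ` U \<inter> (X \<inter> ?h -` V1) \<noteq> {}" using bspec[OF n(2) m1(1)] by simp
      have h2: "seq_iter f n ` U \<inter> (X \<inter> ?h -` V2) \<noteq> {}" using bspec[OF n(2) m1(2)] by simp
      obtain x where x: "x \<in> U" "seq_iter f n x \<in> X \<inter> ?h -` V1" using h1 by blast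
      obtain y where y: "y \<in> U" "seq_iter f n y \<in> X \<inter> ?h -` V2" using h2 by blast
      note xy = x y
      have "seq_iter f j x \<in> V1" "seq_iter f j y \<in> V2"
        using xy by (auto simp: jk si_shift)
      then have "dist (seq_iter f j x) (seq_iter f j y) > e" by (rule far)
      moreover have "j \<ge> 1" using n(1) jk by simp
      ultimately show "j \<in> sens_times f U e" unfolding sens_times_def using xy(1,3) by blast
    qed
    then show "\<exists>n. {n..n+p} \<subseteq> sens_times f U e" by blast
  qed
  then show ?thesis unfolding thickly_sensitive_def good_def using e by blast
qed

end
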